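(* Let $b$ be a prime, $s\in\mathbb{N}$, $\boldsymbol{k}=(k_1,\dots,k_s)\in\mathbb{N}_0^s$, and write $c_j:=\mu_1(k_j)$ and $u:=\{j\mid k_j\neq0\}$. Then for every $j$ and every $L_j\in\mathcal{L}_{\infty,\infty}$, the integer $\ell_j$ with $\vec\ell_j=L_j^\top\vec k_j$ satisfies $\mu_1(\ell_j)=c_j$. Moreover, for every $\boldsymbol{k}'=(k_1',\dots,k_s')\in\mathbb{N}_0^s$ with $\mu_1(k'_j)=c_j$ for all $j$, and every integer $n\ge\max_jc_j$, \[\Pr\left[L_j^\top\vec{k}_j=\vec{k}'_j\text{ for all }j\;\middle|\;L_j\in\mathcal{L}_{\infty,n}\right]=\left(\frac{b}{b-1}\right)^{|u|}b^{-(c_1+\cdots+c_s)},\] where $L_1,\dots,L_s$ are drawn independently at random from $\mathcal{L}_{\infty,n}$.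
   Context: $\mathbb{F}_b=\{0,\dots,b-1\}$ is the field with $b$ elements. For $k\in\mathbb{N}_0$ with $b$-adic expansion $k=\kappa_0+\kappa_1b+\cdots$, write $\vec{k}=(\kappa_0,\kappa_1,\ldots)^\top\in\mathbb{F}_b^{\mathbb{N}}$. NRT weight: for $k\in\mathbb{N}$ written as $k=\kappa_1b^{c_1-1}+\cdots+\kappa_vb^{c_v-1}$ with $\kappa_i\in\{1,\dots,b-1\}$ and $c_1>\cdots>c_v>0$, $\mu_1(k)=c_1$; $\mu_1(0)=0$. For $w,n\in\mathbb{N}\cup\{\infty\}$, $\mathcal{L}_{w,n}$ is the set of matrices $L=(\ell_{i,j})\in\mathbb{F}_b^{w\times n}$ with $\ell_{i,j}=0$ if $i<j$ and $\ell_{i,j}\neq0$ if $i=j$. A random element of $\mathcal{L}_{w,n}$ is obtained by choosing each entry independently: diagonal entries uniformly from $\mathbb{F}_b\setminus\{0\}$, entries with $i>j$ uniformly from $\mathbb{F}_b$, entries with $i<j$ equal to $0$. For $L\in\mathcal{L}_{\infty,n}$, $L^\top\vec k\in\mathbb{F}_b^n$ is the matrix-vector product over $\mathbb{F}_b$, compared with the first $n$ digits of $\vec k'_j$. *)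

theory Defs
  imports "HOL-Probability.Probability"
begin

text \<open>Elements of F_b are represented by the naturals 0..b-1 with arithmetic mod b.
  Indices of digit vectors and matrices are 0-based (paper: 1-based).\<close>

definition digit :: "nat \<Rightarrow> nat \<Rightarrow> nat \<Rightarrow> nat" where
  "digit b k i = k div b ^ i mod b"

definition mu1 :: "nat \<Rightarrow> nat \<Rightarrow> nat" where
  "mu1 b k = (if k = 0 then 0 else Suc (GREATEST i. digit b k i \<noteq> 0))"

definition in_L_inf :: "nat \<Rightarrow> (nat \<Rightarrow> nat \<Rightarrow> nat) \<Rightarrow> bool" where
  "in_L_inf b L \<longleftrightarrow> (\<forall>i j. L i j < b) \<and> (\<forall>i j. i < j \<longrightarrow> L i j = 0) \<and> (\<forall>i. L i i \<noteq> 0)"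

text \<open>Component c of L^T k over F_b (the sum over i is finite since k has finitely many
  nonzero digits).\<close>
definition trans_prod :: "nat \<Rightarrow> (nat \<Rightarrow> nat \<Rightarrow> nat) \<Rightarrow> nat \<Rightarrow> nat \<Rightarrow> nat" where
  "trans_prod b L k c = (\<Sum>i\<in>{i. digit b k i \<noteq> 0}. L i c * digit b k i) mod b"

text \<open>Distribution of entry (i,c) (row i, column c) of a random element of L_{w,n}.\<close>
definition entry_pmf :: "nat \<Rightarrow> nat \<Rightarrow> nat \<Rightarrow> nat pmf" where
  "entry_pmf b i c = (if i < c then return_pmf 0
                      else if i = c then pmf_of_set {1..<b} else pmf_of_set {..<b})"

text \<open>s independent random matrices L_0..L_{s-1} in L_{infinity,n}: the entry (i,c) of
  L_j is the coordinate (j,i,c); all entries independent.\<close>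
definition rand_mats :: "nat \<Rightarrow> nat \<Rightarrow> nat \<Rightarrow> (nat \<times> nat \<times> nat \<Rightarrow> nat) measure" where
  "rand_mats b s n = PiM ({..<s} \<times> UNIV \<times> {..<n})
                        (\<lambda>(j, i, c). measure_pmf (entry_pmf b i c))"

end

theory Submission
  imports Defs
begin

lemma pps: "product_prob_space (\<lambda>x. measure_pmf (p x))"
  by (intro product_prob_spaceI) (auto simp: measure_pmf.prob_space_axioms)

lemma coord_indep:
  "prob_space.indep_vars (PiM I (\<lambda>x. measure_pmf (p x))) (\<lambda>x. measure_pmf (p x)) (\<lambda>x \<omega>. \<omega> x) I"
proof -
  interpret product_prob_space "\<lambda>x. measure_pmf (p x)" I by (rule pps)
  let ?M = "\<lambda>x. measure_pmf (p x)"
  have rv: "\<And>i. i \<in> I \<Longrightarrow> random_variable (?M i) (\<lambda>\<omega>. \<omega> i)"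
    by (rule measurable_component_singleton)
  have fin: "indep_sets (\<lambda>i. sigma_sets (space (PiM I ?M)) {(\<lambda>\<omega>. \<omega> i) -` A \<inter> space (PiM I ?M) | A. A \<in> sets (?M i)}) J"
    if J: "J \<subseteq> I" "J \<noteq> {}" "finite J" for J
  proof -
    have "indep_vars ?M (\<lambda>x \<omega>. \<omega> x) J"
    proof (subst indep_vars_iff_distr_eq_PiM')
      show "J \<noteq> {}" by fact
      show "\<And>i. i \<in> J \<Longrightarrow> random_variable (?M i) (\<lambda>\<omega>. \<omega> i)" using rv J by auto
      have "distr (PiM I ?M) (PiM J ?M) (\<lambda>x. restrict x J) = PiM J ?M"
        by (rule distr_PiM_restrict_finite) (use J in auto)
      also have "PiM J ?M = PiM J (\<lambda>i. distr (PiM I ?M) (?M i) (\<lambda>\<omega>. \<omega> i))"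
        by (rule PiM_cong) (use J PiM_component in auto)
      finally show "distr (PiM I ?M) (PiM J ?M) (\<lambda>x. \<lambda>i\<in>J. x i) = PiM J (\<lambda>i. distr (PiM I ?M) (?M i) (\<lambda>\<omega>. \<omega> i))"
        by (simp add: restrict_def)
    qed
    then show ?thesis unfolding indep_vars_def by blast
  qed
  show ?thesis
    unfolding indep_vars_def
    using rv by (subst indep_sets_finite_index_sets) (use fin in blast)
qed

lemma all_sets:
  fixes p :: "'i \<Rightarrow> 'b::countable pmf"
  assumes "finite K"
  shows "A \<inter> space (PiM K (\<lambda>x. measure_pmf (p x))) \<in> sets (PiM K (\<lambda>x. measure_pmf (p x)))"
proof -
  let ?S = "space (PiM K (\<lambda>x. measure_pmf (p x)))"
  have sp: "?S = PiE K (\<lambda>_. UNIV)" by (simp add: space_PiM)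
  have cnt: "countable (A \<inter> ?S)"
    using countable_PiE[OF assms, of "\<lambda>_. UNIV :: 'b set"] sp by (auto intro: countable_subset)
  have eq: "A \<inter> ?S = (\<Union>x\<in>A \<inter> ?S. PiE K (\<lambda>i. {x i}))"
    using sp by (auto simp: PiE_iff extensional_def) (metis ext)
  show ?thesis
    by (subst eq, rule sets.countable_UN''[OF cnt]) (auto intro!: sets_PiM_I_finite assms)
qed

lemma fin_dep_sets:
  fixes p :: "'i \<Rightarrow> 'b::countable pmf"
  assumes "finite J" "J \<subseteq> I"
    and dep: "\<And>\<omega>. Q \<omega> = Q (restrict \<omega> J)"
  shows "{\<omega> \<in> space (PiM I (\<lambda>x. measure_pmf (p x))). Q \<omega>} \<in> sets (PiM I (\<lambda>x. measure_pmf (p x)))"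
proof -
  let ?P = "PiM I (\<lambda>x. measure_pmf (p x))"
  have m: "(\<lambda>\<omega>. restrict \<omega> J) \<in> measurable ?P (PiM J (\<lambda>x. measure_pmf (p x)))"
    by (rule measurable_restrict_subset) fact
  have "(\<lambda>\<omega>. restrict \<omega> J) -` ({z. Q z} \<inter> space (PiM J (\<lambda>x. measure_pmf (p x)))) \<inter> space ?P \<in> sets ?P"
    by (rule measurable_sets[OF m all_sets[OF assms(1)]])
  also have "(\<lambda>\<omega>. restrict \<omega> J) -` ({z. Q z} \<inter> space (PiM J (\<lambda>x. measure_pmf (p x)))) \<inter> space ?P
      = {\<omega> \<in> space ?P. Q \<omega>}"
    using measurable_space[OF m] dep by auto
  finally show ?thesis .
qed

lemma prob_single:
  assumes "x0 \<in> I"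
  shows "measure (PiM I (\<lambda>x. measure_pmf (p x))) {\<omega> \<in> space (PiM I (\<lambda>x. measure_pmf (p x))). \<omega> x0 \<in> A}
     = measure_pmf.prob (p x0) A"
proof -
  interpret product_prob_space "\<lambda>x. measure_pmf (p x)" I by (rule pps)
  show ?thesis
    using emeasure_PiM_Collect_single[OF assms, of A]
    by (simp add: emeasure_eq_measure measure_pmf.emeasure_eq_measure)
qed
lemma count_sol:
  fixes b :: nat
  assumes "prime b" "\<not> b dvd \<kappa>" "d < b"
  shows "card {y \<in> {..<b}. (y * \<kappa> + r) mod b = d} = 1"
proof -
  let ?f = "\<lambda>y. (y * \<kappa> + r) mod b"
  have b0: "b > 0" using assms prime_gt_0_nat by blast
  have key: "u = v" if "u \<le> v" "v < b" "(u * \<kappa> + r) mod b = (v * \<kappa> + r) mod b" for u v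
  proof -
    have "b dvd (v * \<kappa> + r) - (u * \<kappa> + r)"
      using that by (subst mod_eq_dvd_iff_nat[symmetric]) auto
    also have "(v * \<kappa> + r) - (u * \<kappa> + r) = (v - u) * \<kappa>" by (simp add: diff_mult_distrib)
    finally have "b dvd (v - u)" using assms(1,2) prime_dvd_mult_iff by blast
    moreover have "v - u < b" using that by linarith
    ultimately have "v - u = 0" using dvd_imp_le[of b "v-u"] by linarith
    then show ?thesis using that by simp
  qed
  have inj: "inj_on ?f {..<b}"
  proof (rule inj_onI)
    fix x y assume x: "x \<in> {..<b}" and y: "y \<in> {..<b}" and e: "?f x = ?f y"
    show "x = y"
    proof (cases "x \<le> y")
      case True then show ?thesis using key[of x y] y e by blast
    next
      case False then show ?thesis using key[of y x] x e by fastforce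
    qed
  qed
  have "?f ` {..<b} = {..<b}"
    by (rule endo_inj_surj) (use inj b0 in auto)
  then have "d \<in> ?f ` {..<b}" using assms(3) by simp
  then obtain y0 where y0: "y0 < b" "?f y0 = d" by force
  have "{y \<in> {..<b}. ?f y = d} = {y0}"
    using y0 inj unfolding inj_on_def by blast
  then show ?thesis by simp
qed

lemma pivot:
  fixes p :: "'i \<Rightarrow> nat pmf" and g :: "('i \<Rightarrow> nat) \<Rightarrow> nat"
  assumes x0: "x0 \<in> I" and K: "K \<subseteq> I" "finite K" "x0 \<notin> K"
    and px0: "p x0 = pmf_of_set {..<b}" and b: "prime b" "\<not> b dvd \<kappa>" "d < b"
    and dep: "\<And>\<omega>. g \<omega> = g (restrict \<omega> K)"
  shows "measure (PiM I (\<lambda>x. measure_pmf (p x)))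
     {\<omega> \<in> space (PiM I (\<lambda>x. measure_pmf (p x))). (\<omega> x0 * \<kappa> + g \<omega>) mod b = d} = 1 / b"
proof -
  interpret product_prob_space "\<lambda>x. measure_pmf (p x)" I by (rule pps)
  let ?M = "\<lambda>x. measure_pmf (p x)"
  let ?P = "PiM I ?M"
  let ?Y = "\<lambda>\<omega>. restrict \<omega> {x0}"
  let ?Z = "\<lambda>\<omega>. restrict \<omega> K"
  have b0: "b > 0" using b prime_gt_0_nat by blast
  have ind: "indep_var (PiM {x0} ?M) ?Y (PiM K ?M) ?Z"
    using indep_var_restrict[OF coord_indep[of I p], of "{x0}" K] x0 K by auto
  define A where "A r = {z. (z x0 * \<kappa> + r) mod b = d} \<inter> space (PiM {x0} ?M)" for r
  define C where "C r = {z. g z mod b = r} \<inter> space (PiM K ?M)" for r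
  have A_sets: "A r \<in> sets (PiM {x0} ?M)" for r unfolding A_def by (rule all_sets) simp
  have C_sets: "C r \<in> sets (PiM K ?M)" for r unfolding C_def by (rule all_sets) (use K in simp)
  have mY: "?Y \<in> measurable ?P (PiM {x0} ?M)" by (rule measurable_restrict_subset) (use x0 in simp)
  have mZ: "?Z \<in> measurable ?P (PiM K ?M)" by (rule measurable_restrict_subset) (use K in simp)
  have Y: "prob (?Y -` A r \<inter> space ?P) = 1 / b" for r
  proof -
    have "?Y -` A r \<inter> space ?P = {\<omega> \<in> space ?P. \<omega> x0 \<in> {y. (y * \<kappa> + r) mod b = d}}"
      using measurable_space[OF mY] by (auto simp: A_def)
    then have "prob (?Y -` A r \<inter> space ?P) = measure_pmf.prob (p x0) {y. (y * \<kappa> + r) mod b = d}"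
      using prob_single[OF x0, of p "{y. (y * \<kappa> + r) mod b = d}"] by simp
    also have "\<dots> = card {y \<in> {..<b}. (y * \<kappa> + r) mod b = d} / b"
      unfolding px0 using b0 by (subst measure_pmf_of_set) (auto simp: Int_def)
    also have "\<dots> = 1 / b" using count_sol[OF b] by simp
    finally show ?thesis .
  qed
  have Zset: "?Z -` C r \<inter> space ?P = {\<omega> \<in> space ?P. g \<omega> mod b = r}" for r
    using measurable_space[OF mZ] dep by (auto simp: C_def)
  have Zsum: "(\<Sum>r<b. prob (?Z -` C r \<inter> space ?P)) = 1"
  proof -
    have "(\<Sum>r<b. prob (?Z -` C r \<inter> space ?P)) = prob (\<Union>r<b. ?Z -` C r \<inter> space ?P)"
      by (rule finite_measure_finite_Union[symmetric])
         (use measurable_sets[OF mZ C_sets] in \<open>auto simp: disjoint_family_on_def C_def\<close>)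
    also have "(\<Union>r<b. ?Z -` C r \<inter> space ?P) = space ?P"
      using b0 by (auto simp: Zset)
    also have "prob (space ?P) = 1" by (rule P.prob_space)
    finally show ?thesis .
  qed
  let ?W = "\<lambda>r. (\<lambda>\<omega>. (?Y \<omega>, ?Z \<omega>)) -` (A r \<times> C r) \<inter> space ?P"
  have E_eq: "{\<omega> \<in> space ?P. (\<omega> x0 * \<kappa> + g \<omega>) mod b = d} = (\<Union>r<b. ?W r)"
  proof (intro equalityI subsetI)
    fix \<omega> assume "\<omega> \<in> {\<omega> \<in> space ?P. (\<omega> x0 * \<kappa> + g \<omega>) mod b = d}"
    then have w: "\<omega> \<in> space ?P" "(\<omega> x0 * \<kappa> + g \<omega>) mod b = d" by auto
    have "(\<omega> x0 * \<kappa> + g \<omega> mod b) mod b = d" using w(2) by (simp add: mod_add_right_eq)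
    then show "\<omega> \<in> (\<Union>r<b. ?W r)"
      using w measurable_space[OF mY] measurable_space[OF mZ] b0 dep[of \<omega>]
      by (auto simp: A_def C_def intro!: bexI[of _ "g \<omega> mod b"])
  next
    fix \<omega> assume "\<omega> \<in> (\<Union>r<b. ?W r)"
    then obtain r where w: "\<omega> \<in> space ?P" "(\<omega> x0 * \<kappa> + r) mod b = d" "g \<omega> mod b = r"
      using dep[of \<omega>] by (auto simp: A_def C_def)
    then have "(\<omega> x0 * \<kappa> + g \<omega>) mod b = d" by (metis mod_add_right_eq)
    then show "\<omega> \<in> {\<omega> \<in> space ?P. (\<omega> x0 * \<kappa> + g \<omega>) mod b = d}" using w by auto
  qed
  have "prob (\<Union>r<b. ?W r) = (\<Sum>r<b. prob (?W r))"
  proof (rule finite_measure_finite_Union)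
    show "?W ` {..<b} \<subseteq> events"
    proof (rule image_subsetI)
      fix r assume "r \<in> {..<b}"
      have "?W r = (?Y -` A r \<inter> space ?P) \<inter> (?Z -` C r \<inter> space ?P)" by blast
      then show "?W r \<in> events"
        using measurable_sets[OF mY A_sets] measurable_sets[OF mZ C_sets] by (simp only: sets.Int)
    qed
    show "disjoint_family_on ?W {..<b}"
      by (auto simp: disjoint_family_on_def C_def)
  qed simp
  also have "\<dots> = (\<Sum>r<b. prob (?Y -` A r \<inter> space ?P) * prob (?Z -` C r \<inter> space ?P))"
    by (intro sum.cong refl indep_varD[OF ind A_sets C_sets])
  also have "\<dots> = (\<Sum>r<b. 1 / b * prob (?Z -` C r \<inter> space ?P))" by (simp add: Y)
  also have "\<dots> = 1 / b * (\<Sum>r<b. prob (?Z -` C r \<inter> space ?P))" by (rule sum_distrib_left[symmetric])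
  also have "\<dots> = 1 / b" by (simp only: Zsum mult_1_right)
  finally show ?thesis using E_eq by simp
qed


lemma diag:
  fixes p :: "'i \<Rightarrow> nat pmf"
  assumes x0: "x0 \<in> I" and px0: "p x0 = pmf_of_set {1..<b}"
    and b: "prime b" "\<not> b dvd \<kappa>" "0 < d" "d < b"
  shows "measure (PiM I (\<lambda>x. measure_pmf (p x)))
     {\<omega> \<in> space (PiM I (\<lambda>x. measure_pmf (p x))). (\<omega> x0 * \<kappa>) mod b = d} = 1 / (real b - 1)"
proof -
  have b1: "b > 1" using b prime_gt_1_nat by blast
  have "measure (PiM I (\<lambda>x. measure_pmf (p x)))
     {\<omega> \<in> space (PiM I (\<lambda>x. measure_pmf (p x))). (\<omega> x0 * \<kappa>) mod b = d}
     = measure_pmf.prob (p x0) {y. (y * \<kappa>) mod b = d}"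
    using prob_single[OF x0, of p "{y. (y * \<kappa>) mod b = d}"] by simp
  also have "\<dots> = card ({1..<b} \<inter> {y. (y * \<kappa>) mod b = d}) / card {1..<b}"
    unfolding px0 using b1 by (subst measure_pmf_of_set) auto
  also have "{1..<b} \<inter> {y. (y * \<kappa>) mod b = d} = {y \<in> {..<b}. (y * \<kappa> + 0) mod b = d}"
    using b by (auto simp: Suc_le_eq intro!: Nat.gr0I)
  also have "card \<dots> = 1" using count_sol[OF b(1,2,4)] .
  finally show ?thesis using b1 by (simp add: of_nat_diff)
qed

lemma digit_Suc: "digit b k (Suc i) = digit b (k div b) i"
  by (simp add: digit_def div_mult2_eq)

lemma digit_0_num [simp]: "digit b 0 i = 0"
  by (simp add: digit_def)

lemma digit_lt: "b > 0 \<Longrightarrow> digit b k i < b"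
  by (simp add: digit_def)

lemma digit_zero_large:
  assumes "b \<ge> 2" "k \<le> i" shows "digit b k i = 0"
proof -
  have "k < 2 ^ i" using assms(2) less_exp[of i] by linarith
  also have "2 ^ i \<le> b ^ i" using assms(1) by (simp add: power_mono)
  finally show ?thesis by (simp add: digit_def)
qed

lemma digit_exists_nonzero:
  assumes "b \<ge> 2" "k \<noteq> 0" shows "\<exists>i. digit b k i \<noteq> 0"
  using assms(2)
proof (induction k rule: less_induct)
  case (less k)
  show ?case
  proof (cases "k mod b = 0")
    case True
    then have "k div b \<noteq> 0" using less.prems by auto
    moreover have "k div b < k" using less.prems assms(1) by simp
    ultimately obtain i where "digit b (k div b) i \<noteq> 0" using less.IH by blast
    then show ?thesis by (metis digit_Suc)
  next
    case False
    then show ?thesis by (intro exI[of _ 0]) (simp add: digit_def)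
  qed
qed

lemma mu1_props:
  assumes "b \<ge> 2" "k \<noteq> 0"
  shows "mu1 b k \<ge> 1" "digit b k (mu1 b k - 1) \<noteq> 0" "\<And>i. i \<ge> mu1 b k \<Longrightarrow> digit b k i = 0"
proof -
  obtain i0 where i0: "digit b k i0 \<noteq> 0" using digit_exists_nonzero[OF assms] by blast
  have bd: "y \<le> k" if "digit b k y \<noteq> 0" for y
    using digit_zero_large[OF assms(1), of k y] that by (cases "k \<le> y") auto
  have m: "mu1 b k = Suc (GREATEST i. digit b k i \<noteq> 0)" using assms by (simp add: mu1_def)
  show "mu1 b k \<ge> 1" using m by simp
  show "digit b k (mu1 b k - 1) \<noteq> 0" using m GreatestI_nat[of "\<lambda>i. digit b k i \<noteq> 0", OF i0 bd] by simp
  fix i assume "i \<ge> mu1 b k"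
  then show "digit b k i = 0" using m Greatest_le_nat[of "\<lambda>i. digit b k i \<noteq> 0" i k] bd by fastforce
qed

lemma mu1_zero_iff: "mu1 b k = 0 \<longleftrightarrow> k = 0"
  by (simp add: mu1_def)

lemma mu1_charact:
  assumes "b \<ge> 2" "m \<ge> 1" "digit b x (m - 1) \<noteq> 0" "\<And>i. i \<ge> m \<Longrightarrow> digit b x i = 0"
  shows "mu1 b x = m"
proof -
  have x: "x \<noteq> 0" using assms(3) by (metis digit_0_num)
  have "(GREATEST i. digit b x i \<noteq> 0) = m - 1"
  proof (rule Greatest_equality)
    show "digit b x (m - 1) \<noteq> 0" by fact
    fix y assume "digit b x y \<noteq> 0"
    then show "y \<le> m - 1" using assms(4)[of y] by (cases "m \<le> y") auto
  qed
  then show ?thesis using x assms(2) by (simp add: mu1_def)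
qed

lemma digits_construct:
  assumes "b > 0" "\<And>c. a c < b" "\<And>c. c \<ge> m \<Longrightarrow> a c = 0"
  shows "\<exists>l. \<forall>c. digit b l c = a c"
  using assms(2,3)
proof (induction m arbitrary: a)
  case 0
  then show ?case by (intro exI[of _ 0]) auto
next
  case (Suc m)
  obtain l' where l': "\<forall>c. digit b l' c = a (Suc c)"
    using Suc.IH[of "\<lambda>c. a (Suc c)"] Suc.prems by auto
  have d: "(a 0 + b * l') div b = l'" using Suc.prems(1)[of 0] assms(1) by simp
  show ?case
  proof (intro exI allI)
    fix c show "digit b (a 0 + b * l') c = a c"
    proof (cases c)
      case 0 then show ?thesis using Suc.prems(1)[of 0] by (simp add: digit_def)
    next
      case (Suc c') then show ?thesis by (simp add: digit_Suc d l')
    qed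
  qed
qed


lemma supp_sub:
  assumes "b \<ge> 2" shows "{i. digit b k i \<noteq> 0} \<subseteq> {..<mu1 b k}"
proof (cases "k = 0")
  case True then show ?thesis by simp
next
  case False
  show ?thesis
  proof
    fix i assume "i \<in> {i. digit b k i \<noteq> 0}"
    then show "i \<in> {..<mu1 b k}" using mu1_props(3)[OF assms False, of i] by (cases "mu1 b k \<le> i") auto
  qed
qed

lemma part1:
  assumes b: "prime b" and L: "in_L_inf b L"
  shows "\<exists>l. (\<forall>c. digit b l c = trans_prod b L k c) \<and> mu1 b l = mu1 b k"
proof -
  have b2: "b \<ge> 2" using b prime_ge_2_nat by blast
  define S where "S = {i. digit b k i \<noteq> 0}"
  define m where "m = mu1 b k"
  have Ssub: "S \<subseteq> {..<m}" unfolding S_def m_def by (rule supp_sub[OF b2])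
  have finS: "finite S" using Ssub finite_subset by blast
  have tp: "trans_prod b L k c = (\<Sum>i\<in>S. L i c * digit b k i) mod b" for c
    by (simp add: trans_prod_def S_def)
  have alt: "trans_prod b L k c < b" for c using b2 by (simp add: trans_prod_def)
  have azero: "trans_prod b L k c = 0" if "c \<ge> m" for c
  proof -
    have "(\<Sum>i\<in>S. L i c * digit b k i) = 0"
      using Ssub that L by (intro sum.neutral) (auto simp: in_L_inf_def)
    then show ?thesis by (simp add: tp)
  qed
  obtain l where l: "\<forall>c. digit b l c = trans_prod b L k c"
    using digits_construct[of b "trans_prod b L k" m] b2 alt azero by auto
  show ?thesis
  proof (cases "k = 0")
    case True
    then have m0: "m = 0" unfolding m_def by (simp add: mu1_zero_iff)
    have "digit b l c = 0" for c using l azero[of c] m0 by simp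
    then have "l = 0" using digit_exists_nonzero[OF b2, of l] by auto
    show ?thesis
    proof (intro exI conjI)
      show "\<forall>c. digit b l c = trans_prod b L k c" by (rule l)
      show "mu1 b l = mu1 b k" using \<open>l = 0\<close> True by simp
    qed
  next
    case False
    note mp = mu1_props[OF b2 False, folded m_def]
    have mS: "m - 1 \<in> S" using mp by (simp add: S_def)
    have "(\<Sum>i\<in>S. L i (m - 1) * digit b k i) = L (m - 1) (m - 1) * digit b k (m - 1)
        + (\<Sum>i\<in>S - {m - 1}. L i (m - 1) * digit b k i)"
      using finS mS by (simp add: sum.remove)
    also have "(\<Sum>i\<in>S - {m - 1}. L i (m - 1) * digit b k i) = 0"
    proof (intro sum.neutral ballI)
      fix i assume "i \<in> S - {m - 1}"
      then have "i < m - 1" using Ssub by auto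
      then show "L i (m - 1) * digit b k i = 0" using L by (simp add: in_L_inf_def)
    qed
    finally have sumeq: "(\<Sum>i\<in>S. L i (m - 1) * digit b k i) = L (m - 1) (m - 1) * digit b k (m - 1)" by simp
    have Lp: "L (m - 1) (m - 1) < b" "L (m - 1) (m - 1) \<noteq> 0" using L unfolding in_L_inf_def by blast+
    have "\<not> b dvd L (m - 1) (m - 1)"
    proof
      assume "b dvd L (m - 1) (m - 1)"
      then have "b \<le> L (m - 1) (m - 1)" using Lp(2) dvd_imp_le by blast
      then show False using Lp(1) by simp
    qed
    moreover have "\<not> b dvd digit b k (m - 1)"
    proof
      assume "b dvd digit b k (m - 1)"
      then have "b \<le> digit b k (m - 1)" using mp(2) dvd_imp_le by blast
      then show False using digit_lt[of b k "m - 1"] b2 by simp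
    qed
    ultimately have "\<not> b dvd L (m - 1) (m - 1) * digit b k (m - 1)"
      using b prime_dvd_mult_iff by blast
    then have "trans_prod b L k (m - 1) \<noteq> 0" unfolding tp[of "m - 1"] sumeq by (simp add: dvd_eq_mod_eq_0)
    then have "mu1 b l = m"
      using l azero mp(1) by (intro mu1_charact[OF b2]) auto
    then show ?thesis using l unfolding m_def by blast
  qed
qed


lemma set_entry_pmf:
  assumes "b \<ge> 2"
  shows "set_pmf (entry_pmf b i c) = (if i < c then {0} else if i = c then {1..<b} else {..<b})"
proof -
  have "0 \<in> {..<b}" "1 \<in> {1..<b}" using assms by auto
  then have "{..<b} \<noteq> {}" "{1..<b} \<noteq> {}" by blast+
  then show ?thesis by (simp add: entry_pmf_def set_pmf_of_set)
qed

lemma part2: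
  fixes b s n :: nat and k k' :: "nat \<Rightarrow> nat"
  assumes b: "prime b" and mu: "\<forall>j<s. mu1 b (k' j) = mu1 b (k j)" and nb: "\<forall>j<s. mu1 b (k j) \<le> n"
  shows "measure (rand_mats b s n)
              {\<omega> \<in> space (rand_mats b s n). \<forall>j<s. \<forall>c<n.
                  trans_prod b (\<lambda>i c. \<omega> (j, i, c)) (k j) c = digit b (k' j) c}
            = (real b / (real b - 1)) ^ card {j \<in> {..<s}. k j \<noteq> 0}
              / real b ^ (\<Sum>j<s. mu1 b (k j))"
proof -
  have b2: "b \<ge> 2" using b prime_ge_2_nat by blast
  define ep where "ep = (\<lambda>x::nat\<times>nat\<times>nat. entry_pmf b (fst (snd x)) (snd (snd x)))"
  define I where "I = {..<s} \<times> (UNIV::nat set) \<times> {..<n}"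
  have "(\<lambda>(j::nat, i::nat, c::nat). measure_pmf (entry_pmf b i c)) = (\<lambda>x. measure_pmf (ep x))"
    by (rule ext) (auto simp: ep_def split: prod.split)
  then have RM: "rand_mats b s n = PiM I (\<lambda>x. measure_pmf (ep x))"
    unfolding rand_mats_def I_def by simp
  let ?P = "PiM I (\<lambda>x. measure_pmf (ep x))"
  interpret product_prob_space "\<lambda>x. measure_pmf (ep x)" I by (rule pps)
  define \<kappa> where "\<kappa> j i = digit b (k j) i" for j i
  define S where "S j = {i. digit b (k j) i \<noteq> 0}" for j
  define m where "m j = mu1 b (k j)" for j
  define U where "U = {j \<in> {..<s}. k j \<noteq> 0}"
  define B where "B = Sigma U (\<lambda>j. {..<m j})"
  define T where "T j c = S j \<inter> {c..}" for j c
  define f where "f \<omega> j c = (\<Sum>i\<in>T j c. \<omega> (j, i, c) * \<kappa> j i) mod b" for \<omega> :: "nat\<times>nat\<times>nat \<Rightarrow> nat" and j c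
  define d where "d j c = digit b (k' j) c" for j c
  define E where "E = {\<omega> \<in> space ?P. \<forall>j<s. \<forall>c<n. trans_prod b (\<lambda>i c. \<omega> (j, i, c)) (k j) c = digit b (k' j) c}"
  define E' where "E' = {\<omega> \<in> space ?P. \<forall>jc\<in>B. f \<omega> (fst jc) (snd jc) = d (fst jc) (snd jc)}"
  have Ssub: "S j \<subseteq> {..<m j}" for j unfolding S_def m_def by (rule supp_sub[OF b2])
  have finS: "finite (S j)" for j using Ssub finite_subset by blast
  have finT: "finite (T j c)" for j c using finS by (simp add: T_def)
  have TS: "T j c \<subseteq> S j" for j c by (auto simp: T_def)
  have finU: "finite U" by (simp add: U_def)
  have finB: "finite B" using finU by (simp add: B_def)
  have Bsub: "j < s \<and> c < n \<and> c < m j \<and> k j \<noteq> 0" if "(j, c) \<in> B" for j c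
    using that nb by (auto simp: B_def U_def m_def)
  have k'0: "k' j = 0" if "j < s" "k j = 0" for j
  proof -
    have "mu1 b (k' j) = mu1 b (k j)" using mu that(1) by blast
    then show ?thesis using that(2) mu1_zero_iff by metis
  qed
  have dzero: "d j c = 0" if "j < s" "c \<ge> m j" for j c
  proof (cases "k' j = 0")
    case True then show ?thesis by (simp add: d_def)
  next
    case False then show ?thesis using mu1_props(3)[OF b2 False, of c] mu that by (simp add: d_def m_def)
  qed
  have dtop: "d j (m j - 1) \<noteq> 0" "d j (m j - 1) < b" if "j < s" "k j \<noteq> 0" for j
  proof -
    have "k' j \<noteq> 0" using mu that by (metis mu1_zero_iff)
    then show "d j (m j - 1) \<noteq> 0" using mu1_props(2)[OF b2, of "k' j"] mu that by (simp add: d_def m_def)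
    show "d j (m j - 1) < b" using b2 by (simp add: d_def digit_lt)
  qed
  have dlt: "d j c < b" for j c using b2 by (simp add: d_def digit_lt)
  have \<kappa>top: "\<kappa> j (m j - 1) \<noteq> 0" "\<kappa> j (m j - 1) < b" if "k j \<noteq> 0" for j
    using mu1_props(2)[OF b2 that] b2 by (auto simp: \<kappa>_def m_def digit_lt)
  have \<kappa>ndvd: "\<not> b dvd \<kappa> j (m j - 1)" if "k j \<noteq> 0" for j
  proof
    assume "b dvd \<kappa> j (m j - 1)"
    then have "b \<le> \<kappa> j (m j - 1)" using \<kappa>top[OF that] dvd_imp_le by blast
    then show False using \<kappa>top[OF that] by simp
  qed
  have topS: "m j - 1 \<in> S j" "m j \<ge> 1" if "k j \<noteq> 0" for j
    using mu1_props(1,2)[OF b2 that] by (auto simp: S_def m_def)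
  have cntI: "countable I" by (rule countable_subset[of _ UNIV]) simp_all
  have AEG: "AE \<omega> in ?P. \<forall>x\<in>I. \<omega> x \<in> set_pmf (ep x)"
    using cntI by (subst AE_ball_countable) (auto intro!: AE_component AE_measure_pmf)
  define N where "N = (\<Sum>j<s. m j)"
  define J where "J = {..<s} \<times> {..<N} \<times> {..<n}"
  have mN: "m j \<le> N" if "j < s" for j unfolding N_def using that by (intro member_le_sum) auto
  have finJ: "finite J" by (simp add: J_def)
  have JI: "J \<subseteq> I" by (auto simp: J_def I_def)
  have inJ: "(j, i, c) \<in> J" if "j < s" "i \<in> S j" "c < n" for j i c
    using that Ssub[of j] mN[of j] by (auto simp: J_def)
  have tp_restr: "trans_prod b (\<lambda>i c. restrict \<omega> J (j, i, c)) (k j) c = trans_prod b (\<lambda>i c. \<omega> (j, i, c)) (k j) c"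
    if "j < s" "c < n" for \<omega> j c
    unfolding trans_prod_def using inJ[OF that(1) _ that(2)]
    by (intro arg_cong[where f="\<lambda>x. x mod b"] sum.cong) (auto simp: S_def)
  have f_restr: "f (restrict \<omega> J) j c = f \<omega> j c" if "(j, c) \<in> B" for \<omega> j c
    unfolding f_def using inJ[of j _ c] Bsub[OF that] TS[of j c]
    by (intro arg_cong[where f="\<lambda>x. x mod b"] sum.cong) auto
  have E_sets: "E \<in> sets ?P"
    unfolding E_def by (rule fin_dep_sets[OF finJ JI]) (use tp_restr in simp)
  have E'_sets: "E' \<in> sets ?P"
    unfolding E'_def by (rule fin_dep_sets[OF finJ JI]) (auto simp: f_restr)
  have eqv: "\<omega> \<in> E \<longleftrightarrow> \<omega> \<in> E'" if G: "\<forall>x\<in>I. \<omega> x \<in> set_pmf (ep x)" for \<omega>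
  proof -
    have z: "\<omega> (j, i, c) = 0" if "j < s" "c < n" "i < c" for j i c
      using G[rule_format, of "(j, i, c)"] that b2 by (simp add: I_def ep_def set_entry_pmf)
    have tpf: "trans_prod b (\<lambda>i c. \<omega> (j, i, c)) (k j) c = f \<omega> j c" if "j < s" "c < n" for j c
    proof -
      have "(\<Sum>i\<in>S j. \<omega> (j, i, c) * \<kappa> j i) = (\<Sum>i\<in>T j c. \<omega> (j, i, c) * \<kappa> j i)"
      proof (rule sum.mono_neutral_right[OF finS TS], rule ballI)
        fix i assume "i \<in> S j - T j c"
        then have "i < c" by (auto simp: T_def)
        then show "\<omega> (j, i, c) * \<kappa> j i = 0" using z that by simp
      qed
      then show ?thesis by (simp add: trans_prod_def f_def S_def \<kappa>_def)
    qed
    have triv: "f \<omega> j c = d j c" if "j < s" "c < n" "(j, c) \<notin> B" for j c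
    proof -
      have "T j c = {} \<and> d j c = 0"
      proof (cases "k j = 0")
        case True
        then show ?thesis using k'0[OF that(1) True] by (simp add: T_def S_def d_def)
      next
        case False
        then have "c \<ge> m j" using that by (auto simp: B_def U_def)
        then show ?thesis using Ssub[of j] dzero[OF that(1)] by (auto simp: T_def)
      qed
      then show ?thesis by (simp add: f_def)
    qed
    have "(\<forall>j<s. \<forall>c<n. trans_prod b (\<lambda>i c. \<omega> (j, i, c)) (k j) c = digit b (k' j) c)
      \<longleftrightarrow> (\<forall>jc\<in>B. f \<omega> (fst jc) (snd jc) = d (fst jc) (snd jc))"
    proof
      assume H: "\<forall>j<s. \<forall>c<n. trans_prod b (\<lambda>i c. \<omega> (j, i, c)) (k j) c = digit b (k' j) c"
      show "\<forall>jc\<in>B. f \<omega> (fst jc) (snd jc) = d (fst jc) (snd jc)"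
      proof
        fix jc assume "jc \<in> B"
        then obtain j c where jc: "jc = (j, c)" "(j, c) \<in> B" by (cases jc) auto
        then have "j < s" "c < n" using Bsub by blast+
        then show "f \<omega> (fst jc) (snd jc) = d (fst jc) (snd jc)"
          using H tpf jc by (simp add: d_def)
      qed
    next
      assume H: "\<forall>jc\<in>B. f \<omega> (fst jc) (snd jc) = d (fst jc) (snd jc)"
      show "\<forall>j<s. \<forall>c<n. trans_prod b (\<lambda>i c. \<omega> (j, i, c)) (k j) c = digit b (k' j) c"
      proof (intro allI impI)
        fix j c assume jc: "j < s" "c < n"
        show "trans_prod b (\<lambda>i c. \<omega> (j, i, c)) (k j) c = digit b (k' j) c"
        proof (cases "(j, c) \<in> B")
          case True
          then show ?thesis using H tpf[OF jc] by (fastforce simp: d_def)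
        next
          case False
          then show ?thesis using triv[OF jc False] tpf[OF jc] by (simp add: d_def)
        qed
      qed
    qed
    then show ?thesis unfolding E_def E'_def by blast
  qed
  have EE: "measure ?P E = measure ?P E'"
    by (rule measure_eq_AE[OF _ E_sets E'_sets]) (use AEG eqv in \<open>auto elim!: AE_mp\<close>)
  define K where "K jc = {fst jc} \<times> T (fst jc) (snd jc) \<times> {snd jc}" for jc
  define pv where "pv jc = (if snd jc = m (fst jc) - 1 then 1 / (real b - 1) else 1 / real b)" for jc
  have blk: "prob {\<omega> \<in> space ?P. f \<omega> j c = d j c} = pv (j, c)" if jc: "(j, c) \<in> B" for j c
  proof -
    note jb = Bsub[OF jc]
    define t where "t = m j - 1"
    have tS: "t \<in> S j" "m j = Suc t" using topS[of j] jb by (auto simp: t_def)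
    have ct: "c \<le> t" using jb tS by simp
    have tT: "t \<in> T j c" using tS ct by (simp add: T_def)
    show ?thesis
    proof (cases "c = t")
      case True
      have Tt: "T j c = {t}" using Ssub[of j] tS True by (auto simp: T_def)
      have "{\<omega> \<in> space ?P. f \<omega> j c = d j c} = {\<omega> \<in> space ?P. (\<omega> (j, t, t) * \<kappa> j t) mod b = d j t}"
        using Tt True by (simp add: f_def)
      also have "prob \<dots> = 1 / (real b - 1)"
      proof (rule diag)
        show "(j, t, t) \<in> I" using jb True by (simp add: I_def)
        show "ep (j, t, t) = pmf_of_set {1..<b}" by (simp add: ep_def entry_pmf_def)
        show "prime b" by fact
        show "\<not> b dvd \<kappa> j t" using \<kappa>ndvd[of j] jb by (simp add: t_def)
        show "0 < d j t" "d j t < b" using dtop[of j] jb by (auto simp: t_def)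
      qed
      finally show ?thesis using True by (simp add: pv_def t_def)
    next
      case False
      then have ct': "c < t" using ct by simp
      define T' where "T' = T j c - {t}"
      define K' where "K' = {j} \<times> T' \<times> {c}"
      define g where "g \<omega> = (\<Sum>i\<in>T'. \<omega> (j, i, c) * \<kappa> j i)" for \<omega> :: "nat\<times>nat\<times>nat \<Rightarrow> nat"
      have fe: "f \<omega> j c = (\<omega> (j, t, c) * \<kappa> j t + g \<omega>) mod b" for \<omega>
        unfolding f_def g_def T'_def using finT tT by (simp add: sum.remove)
      have "{\<omega> \<in> space ?P. f \<omega> j c = d j c} = {\<omega> \<in> space ?P. (\<omega> (j, t, c) * \<kappa> j t + g \<omega>) mod b = d j c}"
        by (simp add: fe)
      also have "prob \<dots> = 1 / real b"
      proof (rule pivot)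
        show "(j, t, c) \<in> I" using jb by (simp add: I_def)
        show "K' \<subseteq> I" using jb by (auto simp: K'_def I_def)
        show "finite K'" using finT by (simp add: K'_def T'_def)
        show "(j, t, c) \<notin> K'" by (simp add: K'_def T'_def)
        show "ep (j, t, c) = pmf_of_set {..<b}" using ct' by (simp add: ep_def entry_pmf_def)
        show "prime b" by fact
        show "\<not> b dvd \<kappa> j t" using \<kappa>ndvd[of j] jb by (simp add: t_def)
        show "d j c < b" by (rule dlt)
        show "g \<omega> = g (restrict \<omega> K')" for \<omega>
          unfolding g_def by (intro sum.cong) (auto simp: K'_def)
      qed
      finally show ?thesis using False by (simp add: pv_def t_def)
    qed
  qed
  have "measure ?P E' = (\<Prod>jc\<in>B. pv jc)"
  proof (cases "B = {}")
    case True
    then have "E' = space ?P" by (simp add: E'_def)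
    then show ?thesis using True P.prob_space by simp
  next
    case False
    have Ksub: "K jc \<subseteq> I" if "jc \<in> B" for jc
      using Bsub[of "fst jc" "snd jc"] that by (auto simp: K_def I_def)
    have disj: "disjoint_family_on K B"
      by (auto simp: disjoint_family_on_def K_def)
    have ind: "indep_vars (\<lambda>jc. PiM (K jc) (\<lambda>x. measure_pmf (ep x))) (\<lambda>jc \<omega>. restrict \<omega> (K jc)) B"
      using indep_vars_restrict[OF coord_indep[of I ep] Ksub disj] by simp
    define A where "A jc = {z. f z (fst jc) (snd jc) = d (fst jc) (snd jc)} \<inter> space (PiM (K jc) (\<lambda>x. measure_pmf (ep x)))" for jc
    have A_sets: "A jc \<in> sets (PiM (K jc) (\<lambda>x. measure_pmf (ep x)))" for jc
      unfolding A_def by (rule all_sets) (simp add: K_def finT)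
    have Fe: "(\<lambda>\<omega>. restrict \<omega> (K jc)) -` A jc \<inter> space ?P = {\<omega> \<in> space ?P. f \<omega> (fst jc) (snd jc) = d (fst jc) (snd jc)}"
      if "jc \<in> B" for jc
    proof -
      have m: "(\<lambda>\<omega>. restrict \<omega> (K jc)) \<in> measurable ?P (PiM (K jc) (\<lambda>x. measure_pmf (ep x)))"
        by (rule measurable_restrict_subset[OF Ksub[OF that]])
      have fr: "f (restrict \<omega> (K jc)) (fst jc) (snd jc) = f \<omega> (fst jc) (snd jc)" for \<omega>
        unfolding f_def by (intro arg_cong[where f="\<lambda>x. x mod b"] sum.cong) (auto simp: K_def)
      show ?thesis using measurable_space[OF m] fr by (auto simp: A_def)
    qed
    have "E' = (\<Inter>jc\<in>B. (\<lambda>\<omega>. restrict \<omega> (K jc)) -` A jc \<inter> space ?P)"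
      using False by (auto simp: Fe E'_def)
    then have "measure ?P E' = (\<Prod>jc\<in>B. prob ((\<lambda>\<omega>. restrict \<omega> (K jc)) -` A jc \<inter> space ?P))"
      using indep_varsD[OF ind False finB subset_refl A_sets] by simp
    also have "\<dots> = (\<Prod>jc\<in>B. pv jc)"
    proof (rule prod.cong[OF refl])
      fix jc assume "jc \<in> B"
      then show "prob ((\<lambda>\<omega>. restrict \<omega> (K jc)) -` A jc \<inter> space ?P) = pv jc"
        using blk[of "fst jc" "snd jc"] Fe by simp
    qed
    finally show ?thesis .
  qed
  also have "(\<Prod>jc\<in>B. pv jc) = (real b / (real b - 1)) ^ card U / real b ^ (\<Sum>j<s. m j)"
  proof -
    have b1: "real b > 1" using b2 by simp
    have "(\<Prod>jc\<in>B. pv jc) = (\<Prod>j\<in>U. \<Prod>c<m j. pv (j, c))"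
      unfolding B_def by (simp add: prod.Sigma finU)
    also have "\<dots> = (\<Prod>j\<in>U. (real b / (real b - 1)) / real b ^ m j)"
    proof (rule prod.cong[OF refl])
      fix j assume jU: "j \<in> U"
      then have kj: "k j \<noteq> 0" by (simp add: U_def)
      obtain t where t: "m j = Suc t" using topS(2)[OF kj] by (cases "m j") auto
      have "(\<Prod>c<m j. pv (j, c)) = (\<Prod>c<t. pv (j, c)) * pv (j, t)"
        by (simp add: t)
      also have "(\<Prod>c<t. pv (j, c)) = (\<Prod>c<t. 1 / real b)"
        by (rule prod.cong[OF refl]) (simp add: pv_def t)
      also have "\<dots> = (1 / real b) ^ t" by simp
      also have "pv (j, t) = 1 / (real b - 1)" by (simp add: pv_def t)
      also have "(1 / real b) ^ t * (1 / (real b - 1)) = (real b / (real b - 1)) / real b ^ m j"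
        using b1 by (simp add: t field_simps)
      finally show "(\<Prod>c<m j. pv (j, c)) = (real b / (real b - 1)) / real b ^ m j" .
    qed
    also have "\<dots> = (real b / (real b - 1)) ^ card U / (\<Prod>j\<in>U. real b ^ m j)"
      by (simp only: prod_dividef prod_constant power_divide)
    also have "(\<Prod>j\<in>U. real b ^ m j) = real b ^ (\<Sum>j\<in>U. m j)"
      by (simp add: power_sum)
    also have "(\<Sum>j\<in>U. m j) = (\<Sum>j<s. m j)"
    proof (rule sum.mono_neutral_left)
      show "U \<subseteq> {..<s}" by (auto simp: U_def)
      show "\<forall>i\<in>{..<s} - U. m i = 0" by (auto simp: U_def m_def mu1_zero_iff)
    qed simp
    finally show ?thesis .
  qed
  finally show ?thesis
    unfolding RM E_def[symmetric] U_def m_def using EE by simp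
qed

theorem lemma2p14:
  fixes b s n :: nat and k k' :: "nat \<Rightarrow> nat"
  assumes "prime b" and "s \<ge> 1"
  shows "(\<forall>j<s. \<forall>L. in_L_inf b L \<longrightarrow>
            (\<exists>l. (\<forall>c. digit b l c = trans_prod b L (k j) c) \<and> mu1 b l = mu1 b (k j)))
       \<and> ((\<forall>j<s. mu1 b (k' j) = mu1 b (k j)) \<longrightarrow> (\<forall>j<s. mu1 b (k j) \<le> n) \<longrightarrow>
            measure (rand_mats b s n)
              {\<omega> \<in> space (rand_mats b s n). \<forall>j<s. \<forall>c<n.
                  trans_prod b (\<lambda>i c. \<omega> (j, i, c)) (k j) c = digit b (k' j) c}
            = (real b / (real b - 1)) ^ card {j \<in> {..<s}. k j \<noteq> 0}
              / real b ^ (\<Sum>j<s. mu1 b (k j)))"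
  using part1[OF assms(1)] part2[OF assms(1)] by blast

end
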